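(* Let $d\ge 2$ and $\ell\ge 2$. The girth $g$ (length of a shortest directed cycle) of the cyclic Kautz digraph $CK(d,\ell)$ satisfies $g\ge k_0$, where $k_0$ is the smallest positive integer $k$ such that $\ell\not\equiv 1 \pmod k$.
   Context: The cyclic Kautz digraph $CK(d,\ell)$ has vertex set $\{x_1\ldots x_\ell\in\mathbb Z_{d+1}^\ell : x_i\neq x_{i+1}\ (1\le i\le \ell-1),\ x_\ell\neq x_1\}$ and arcs $x_1x_2\ldots x_\ell\to x_2\ldots x_\ell y$ for every $y\in\mathbb Z_{d+1}$ with $y\neq x_2,x_\ell$. *)

theory Defs
  imports Main "HOL-Number_Theory.Cong"
begin

text \<open>Vertices of the cyclic Kautz digraph CK(d,l): words x_1...x_l over Z_{d+1}
  (symbols represented by naturals 0..d), with x_i \<noteq> x_{i+1} and x_l \<noteq> x_1.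
  Lists are 0-indexed, so x_1 = xs!0 and x_l = xs!(l-1).\<close>
definition ck_vertices :: "nat \<Rightarrow> nat \<Rightarrow> nat list set" where
  "ck_vertices d l = {xs. length xs = l \<and> (\<forall>i<l. xs ! i < d + 1)
      \<and> (\<forall>i. i + 1 < l \<longrightarrow> xs ! i \<noteq> xs ! (i + 1))
      \<and> xs ! (l - 1) \<noteq> xs ! 0}"

definition ck_arc :: "nat \<Rightarrow> nat \<Rightarrow> nat list \<Rightarrow> nat list \<Rightarrow> bool" where
  "ck_arc d l xs ys \<longleftrightarrow> xs \<in> ck_vertices d l \<and> ys \<in> ck_vertices d l \<and>
     (\<exists>y. y < d + 1 \<and> y \<noteq> xs ! 1 \<and> y \<noteq> xs ! (l - 1) \<and> ys = tl xs @ [y])"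

definition ck_has_cycle :: "nat \<Rightarrow> nat \<Rightarrow> nat \<Rightarrow> bool" where
  "ck_has_cycle d l k \<longleftrightarrow> k > 0 \<and> (\<exists>v :: nat \<Rightarrow> nat list.
      (\<forall>i<k. v i \<in> ck_vertices d l) \<and> inj_on v {..<k} \<and>
      (\<forall>i<k. ck_arc d l (v i) (v ((i + 1) mod k))))"

definition ck_girth :: "nat \<Rightarrow> nat \<Rightarrow> nat" where
  "ck_girth d l = (LEAST k. ck_has_cycle d l k)"

end

theory Submission
  imports Defs
begin

lemma cycle_len_ok:
  assumes l2: "l \<ge> 2" and cyc: "ck_has_cycle d l k"
  shows "\<not> [l = 1] (mod k)"
proof
  assume cg: "[l = 1] (mod k)"
  from cyc obtain v where k0: "k > 0" and V: "\<forall>i<k. v i \<in> ck_vertices d l"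
    and A: "\<forall>i<k. ck_arc d l (v i) (v ((i + 1) mod k))"
    unfolding ck_has_cycle_def by blast
  define w where "w i = v (i mod k)" for i
  have step: "\<exists>y. w (Suc i) = tl (w i) @ [y]" for i
  proof -
    have "i mod k < k" using k0 by simp
    with A have "ck_arc d l (v (i mod k)) (v ((i mod k + 1) mod k))" by blast
    moreover have "(i mod k + 1) mod k = Suc i mod k" by (simp add: mod_Suc_eq)
    ultimately show ?thesis unfolding w_def ck_arc_def by auto
  qed
  have len: "length (w i) = l" for i
    using V k0 unfolding w_def ck_vertices_def by auto
  have sh: "j + m < l \<Longrightarrow> w m ! j = w 0 ! (j + m)" for m j
  proof (induction m arbitrary: j)
    case 0 then show ?case by simp
  next
    case (Suc m)
    obtain y where y: "w (Suc m) = tl (w m) @ [y]" using step by blast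
    have "j < length (tl (w m))" using Suc.prems len[of m] by simp
    then have "w (Suc m) ! j = tl (w m) ! j" using y by (simp add: nth_append)
    also have "\<dots> = w m ! (Suc j)" using \<open>j < length (tl (w m))\<close> by (simp add: nth_tl)
    also have "\<dots> = w 0 ! (Suc j + m)" using Suc by simp
    finally show ?case by simp
  qed
  have "k dvd (l - 1)" using cg l2
    by (metis cong_altdef_nat cong_sym le_trans one_le_numeral)
  then obtain q where q: "l - 1 = k * q" by blast
  have "w (l - 1) ! 0 = w 0 ! (l - 1)" using sh[of 0 "l-1"] l2 by simp
  moreover have "w (l - 1) = w 0" unfolding w_def using q by simp
  ultimately have "w 0 ! (l - 1) = w 0 ! 0" by simp
  moreover have "w 0 \<in> ck_vertices d l" using V k0 unfolding w_def by simp
  ultimately show False unfolding ck_vertices_def by simp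
qed

definition nxt :: "nat \<Rightarrow> nat list \<Rightarrow> nat list" where
  "nxt l xs = tl xs @ [LEAST y. y \<noteq> xs ! 1 \<and> y \<noteq> xs ! (l - 1)]"

lemma nxt_arc:
  assumes d: "d \<ge> 2" and l: "l \<ge> 2" and xs: "xs \<in> ck_vertices d l"
  shows "ck_arc d l xs (nxt l xs)"
proof -
  define P where "P y = (y \<noteq> xs ! 1 \<and> y \<noteq> xs ! (l - 1))" for y
  define y where "y = (LEAST y. P y)"
  have ex: "\<exists>y0::nat. y0 \<le> 2 \<and> P y0" unfolding P_def
  proof -
    have "(xs!1 \<noteq> 0 \<and> xs!(l-1) \<noteq> 0) \<or> (xs!1 \<noteq> 1 \<and> xs!(l-1) \<noteq> 1) \<or> (xs!1 \<noteq> 2 \<and> xs!(l-1) \<noteq> 2)" by arith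
    then show "\<exists>y0::nat. y0 \<le> 2 \<and> y0 \<noteq> xs ! 1 \<and> y0 \<noteq> xs ! (l - 1)" by (metis le0 one_le_numeral order_refl)
  qed
  then obtain y0 where y0: "y0 \<le> 2" "P y0" by blast
  have Py: "P y" unfolding y_def using y0 by (metis LeastI)
  have y2: "y \<le> 2" unfolding y_def using y0 Least_le[of P y0] by simp
  have lx: "length xs = l" using xs unfolding ck_vertices_def by simp
  have ys: "nxt l xs = tl xs @ [y]" unfolding nxt_def y_def P_def by simp
  have len: "length (nxt l xs) = l" using ys lx l by simp
  have nth1: "i < l - 1 \<Longrightarrow> nxt l xs ! i = xs ! Suc i" for i
    using ys lx by (simp add: nth_append nth_tl)
  have nthl: "nxt l xs ! (l - 1) = y" using ys lx by (simp add: nth_append)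
  have "nxt l xs \<in> ck_vertices d l"
    unfolding ck_vertices_def
  proof (intro CollectI conjI allI impI)
    show "length (nxt l xs) = l" by (rule len)
  next
    fix i assume i: "i < l"
    show "nxt l xs ! i < d + 1"
    proof (cases "i < l - 1")
      case True then show ?thesis using nth1 xs unfolding ck_vertices_def by auto
    next
      case False then have "i = l - 1" using i by simp
      then show ?thesis using nthl y2 d by simp
    qed
  next
    fix i assume i: "i + 1 < l"
    show "nxt l xs ! i \<noteq> nxt l xs ! (i + 1)"
    proof (cases "i + 1 < l - 1")
      case True then show ?thesis using nth1 xs unfolding ck_vertices_def by auto
    next
      case False then have e: "i + 1 = l - 1" using i by simp
      have "nxt l xs ! i = xs ! (l - 1)" using nth1[of i] e by simp
      then show ?thesis using nthl e Py unfolding P_def by simp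
    qed
  next
    show "nxt l xs ! (l - 1) \<noteq> nxt l xs ! 0"
      using nthl nth1[of 0] l Py unfolding P_def by simp
  qed
  then show ?thesis unfolding ck_arc_def using xs ys Py P_def y2 d by auto
qed

lemma cycle_exists:
  assumes d: "d \<ge> 2" and l: "l \<ge> 2"
  shows "\<exists>k. ck_has_cycle d l k"
proof -
  define v0 :: "nat list" where "v0 = map (\<lambda>i. if i = l - 1 then 2 else i mod 2) [0..<l]"
  have v0: "v0 \<in> ck_vertices d l"
    unfolding ck_vertices_def
  proof (intro CollectI conjI allI impI)
    show "length v0 = l" unfolding v0_def by simp
  next
    fix i assume "i < l" then show "v0 ! i < d + 1" unfolding v0_def using d
      proof -
        have "(i::nat) mod 2 < 2" by simp
        then show "map (\<lambda>i. if i = l - 1 then 2 else i mod 2) [0..<l] ! i < d + 1"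
          using \<open>i < l\<close> d by (simp, presburger)
      qed
  next
    fix i assume i: "i + 1 < l"
    show "v0 ! i \<noteq> v0 ! (i + 1)"
    proof (cases "i + 1 = l - 1")
      case True then show ?thesis using i unfolding v0_def by simp
    next
      case False
      then have "v0 ! i = i mod 2" "v0 ! (i+1) = (i+1) mod 2" using i unfolding v0_def by auto
      then show ?thesis by presburger
    qed
  next
    show "v0 ! (l - 1) \<noteq> v0 ! 0" using l unfolding v0_def by simp
  qed
  define w where "w n = (nxt l ^^ n) v0" for n
  have wS: "w (Suc n) = nxt l (w n)" for n by (simp add: w_def)
  have wV: "w n \<in> ck_vertices d l" for n
  proof (induction n)
    case 0 then show ?case using v0 by (simp add: w_def)
  next
    case (Suc n) then show ?case using nxt_arc[OF d l Suc] wS unfolding ck_arc_def by simp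
  qed
  have fin: "finite (ck_vertices d l)"
  proof -
    have "ck_vertices d l \<subseteq> {xs. set xs \<subseteq> {..<d+1} \<and> length xs = l}"
      unfolding ck_vertices_def by (auto simp: in_set_conv_nth)
    moreover have "finite {xs. set xs \<subseteq> {..<d+1} \<and> length xs = l}"
      by (rule finite_lists_length_eq) simp
    ultimately show ?thesis by (rule finite_subset)
  qed
  have "\<not> inj w"
  proof
    assume "inj w"
    then have "infinite (range w)" using finite_imageD infinite_UNIV_nat by blast
    moreover have "range w \<subseteq> ck_vertices d l" using wV by auto
    ultimately show False using fin finite_subset by blast
  qed
  then obtain a b where "w a = w b" "a \<noteq> b" unfolding inj_def by blast
  then have exj: "\<exists>j. \<exists>i<j. w i = w j" by (metis linorder_neqE_nat)
  define j where "j = (LEAST j. \<exists>i<j. w i = w j)"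
  obtain i where ij: "i < j" "w i = w j" using LeastI_ex[OF exj] unfolding j_def by blast
  have minj: "j' < j \<Longrightarrow> i' < j' \<Longrightarrow> w i' \<noteq> w j'" for i' j'
    using not_less_Least unfolding j_def by blast
  define k where "k = j - i"
  define v where "v t = w (i + t)" for t
  have "ck_has_cycle d l k"
    unfolding ck_has_cycle_def
  proof (intro conjI exI[of _ v] allI impI)
    show "k > 0" using ij k_def by simp
  next
    fix t show "v t \<in> ck_vertices d l" using wV v_def by simp
  next
    show "inj_on v {..<k}"
    proof (rule inj_onI)
      fix a b assume a: "a \<in> {..<k}" and b: "b \<in> {..<k}" and e: "v a = v b"
      show "a = b"
      proof (rule ccontr)
        assume "a \<noteq> b"
        then consider "a < b" | "b < a" by linarith
        then show False
        proof cases
          case 1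
          have "i + b < j" using b k_def by auto
          then show ?thesis using minj[of "i+b" "i+a"] e 1 v_def by auto
        next
          case 2
          have "i + a < j" using a k_def by auto
          then show ?thesis using minj[of "i+a" "i+b"] e 2 v_def by auto
        qed
      qed
    qed
  next
    fix t assume t: "t < k"
    show "ck_arc d l (v t) (v ((t + 1) mod k))"
    proof (cases "t + 1 < k")
      case True
      then show ?thesis using nxt_arc[OF d l wV[of "i+t"]] wS[of "i+t"] v_def by simp
    next
      case False
      then have "t + 1 = k" using t by simp
      then have "(t+1) mod k = 0" by simp
      moreover have "Suc (i + t) = j" using ij k_def \<open>t+1 = k\<close> by simp
      then have "v 0 = w (Suc (i + t))" using ij v_def by simp
      ultimately show ?thesis using nxt_arc[OF d l wV[of "i+t"]] wS[of "i+t"] v_def by simp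
    qed
  qed
  then show ?thesis by blast
qed

theorem mainTheorem9:
  fixes d l :: nat
  assumes "d \<ge> 2" and "l \<ge> 2"
  shows "ck_girth d l \<ge> (LEAST k::nat. k > 0 \<and> \<not> [l = 1] (mod k))"
proof -
  obtain k where k: "ck_has_cycle d l k" using cycle_exists[OF assms] by blast
  have c: "ck_has_cycle d l (ck_girth d l)" unfolding ck_girth_def using k by (rule LeastI)
  have "ck_girth d l > 0" using c unfolding ck_has_cycle_def by simp
  moreover have "\<not> [l = 1] (mod (ck_girth d l))" using cycle_len_ok[OF assms(2) c] .
  ultimately show ?thesis by (simp add: Least_le)
qed

end
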